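(* For $\tau$ in the upper half-plane, $$\frac{2}{\mathfrak{p}(8\tau)}=\frac{1-v^2(\tau)}{v(\tau)}=\frac{1}{v(\tau)}-v(\tau).$$
   Context: $q=e^{2\pi i\tau}$ and $q^r:=e^{2\pi i r\tau}$ for rational $r$. $v(\tau)=q^{1/2}\prod_{n\ge1}(1-q^n)^{\left(\frac{8}{n}\right)}$ with $\left(\frac{8}{n}\right)$ the Kronecker symbol, and $\mathfrak{p}(\tau)=2q^{1/16}\prod_{n\ge1}\left(\frac{1+q^{n/2}}{1+q^{n/2-1/4}}\right)^2$ (equivalently $\mathfrak{f}_2(\tau/2)^2/\mathfrak{f}(\tau/2)^2$ in terms of the Weber–Schläfli functions). *)

theory Defs
  imports "HOL-Analysis.Analysis"
begin

definition qpow :: "complex \<Rightarrow> real \<Rightarrow> complex" where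
  "qpow \<tau> r = exp (2 * of_real pi * \<i> * of_real r * \<tau>)"

text \<open>Kronecker symbol (8/n) for n >= 1: 0 for even n, 1 if n = +-1 mod 8, -1 if n = +-3 mod 8.\<close>
definition kron8 :: "nat \<Rightarrow> int" where
  "kron8 n = (if n mod 8 = 1 \<or> n mod 8 = 7 then 1
              else if n mod 8 = 3 \<or> n mod 8 = 5 then -1 else 0)"

definition v_fun :: "complex \<Rightarrow> complex" where
  "v_fun \<tau> = qpow \<tau> (1/2) *
     prodinf (\<lambda>k. (1 - qpow \<tau> (real (Suc k))) powi kron8 (Suc k))"

definition p_fun :: "complex \<Rightarrow> complex" where
  "p_fun \<tau> = 2 * qpow \<tau> (1/16) *
     prodinf (\<lambda>k. ((1 + qpow \<tau> (real (Suc k) / 2)) /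
                    (1 + qpow \<tau> (real (Suc k) / 2 - 1/4))) ^ 2)"

end

theory Submission
  imports Defs "HOL-Library.Nat_Bijection"
begin

fun gb :: "complex \<Rightarrow> nat \<Rightarrow> nat \<Rightarrow> complex" where
  "gb Q 0 k = (if k = 0 then 1 else 0)"
| "gb Q (Suc N) 0 = 1"
| "gb Q (Suc N) (Suc k) = Q ^ Suc k * gb Q N (Suc k) + gb Q N k"

definition qfac :: "complex \<Rightarrow> nat \<Rightarrow> complex" where
  "qfac Q N = (\<Prod>i<N. 1 - Q ^ Suc i)"

lemma gb_zero: "k > N \<Longrightarrow> gb Q N k = 0"
proof (induction N arbitrary: k)
  case 0 then show ?case by simp
next
  case (Suc N) then show ?case by (cases k) auto
qed

lemma gb_0 [simp]: "gb Q N 0 = 1"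
  by (cases N) auto

lemma gb_diag: "gb Q N N = 1"
  by (induction N) (auto simp: gb_zero)

lemma gb_closed: "k \<le> N \<Longrightarrow> gb Q N k * qfac Q k * qfac Q (N - k) = qfac Q N"
proof (induction N arbitrary: k)
  case 0 then show ?case by (simp add: qfac_def)
next
  case (Suc N)
  show ?case
  proof (cases k)
    case 0 then show ?thesis by (simp add: qfac_def)
  next
    case (Suc j)
    show ?thesis
    proof (cases "j = N")
      case True
      then show ?thesis using Suc by (simp add: gb_zero gb_diag qfac_def)
    next
      case False
      with Suc Suc.prems have jN: "Suc j \<le> N" by simp
      have e1: "qfac Q (N - j) = qfac Q (N - Suc j) * (1 - Q ^ (N - j))"
      proof -
        have "N - j = Suc (N - Suc j)" using jN by simp
        then show ?thesis unfolding qfac_def by (simp only: prod.lessThan_Suc)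
      qed
      have e2: "qfac Q (Suc j) = qfac Q j * (1 - Q ^ Suc j)"
        by (simp add: qfac_def)
      have e3: "qfac Q (Suc N) = qfac Q N * (1 - Q ^ Suc N)"
        by (simp add: qfac_def)
      note i1 = Suc.IH[OF jN]
      have i2: "gb Q N j * qfac Q j * qfac Q (N - j) = qfac Q N" using Suc.IH jN by simp
      have "gb Q (Suc N) k * qfac Q k * qfac Q (Suc N - k)
          = Q ^ Suc j * gb Q N (Suc j) * qfac Q (Suc j) * qfac Q (N - j)
            + gb Q N j * qfac Q (Suc j) * qfac Q (N - j)"
        using Suc by (simp add: algebra_simps)
      also have "\<dots> = Q ^ Suc j * (gb Q N (Suc j) * qfac Q (Suc j) * qfac Q (N - Suc j)) * (1 - Q ^ (N - j))
            + (gb Q N j * qfac Q j * qfac Q (N - j)) * (1 - Q ^ Suc j)"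
        unfolding e1 e2 by (simp add: algebra_simps)
      also have "\<dots> = qfac Q N * (Q ^ Suc j * (1 - Q ^ (N - j)) + (1 - Q ^ Suc j))"
        using i1 i2 by (simp add: algebra_simps)
      also have "Q ^ Suc j * (1 - Q ^ (N - j)) = Q ^ Suc j - Q ^ Suc N"
        using jN by (simp add: algebra_simps flip: power_add)
      finally have "gb Q (Suc N) k * qfac Q k * qfac Q (Suc N - k) = qfac Q N * (1 - Q ^ Suc N)"
        by (simp add: algebra_simps)
      then show ?thesis using e3 by simp
    qed
  qed
qed

lemma qbinom: "(\<Prod>i<N. 1 + x * R ^ (2*i)) = (\<Sum>k\<le>N. gb (R^2) N k * R ^ (k*(k-1)) * x ^ k)"
proof (induction N arbitrary: x)
  case 0 then show ?case by simp
next
  case (Suc N)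
  define f where "f k = gb (R^2) N k * R ^ (k*(k+1)) * x ^ k" for k
  have "(\<Prod>i<Suc N. 1 + x * R ^ (2*i)) = (1 + x) * (\<Prod>i<N. 1 + (x * R^2) * R ^ (2*i))"
    unfolding prod.lessThan_Suc_shift by (simp del: prod.lessThan_Suc add: power_add power_mult mult.assoc power2_eq_square)
  also have "\<dots> = (1 + x) * (\<Sum>k\<le>N. gb (R^2) N k * R ^ (k*(k-1)) * (x * R^2) ^ k)"
    by (simp add: Suc.IH)
  also have "\<dots> = (\<Sum>k\<le>N. f k) + (\<Sum>k\<le>N. gb (R^2) N k * R ^ (Suc k * k) * x ^ Suc k)"
  proof -
    have a: "R ^ (k*(k-1)) * (x * R^2) ^ k = R ^ (k*(k+1)) * x ^ k" for k
    proof -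
      have "k*(k-1) + 2*k = k*(k+1)" by (cases k) auto
      moreover have "R ^ (k*(k-1)) * (x * R^2) ^ k = R ^ (k*(k-1) + 2*k) * x ^ k"
        by (simp add: power_mult_distrib power_add power_mult)
      ultimately show ?thesis by (simp only:)
    qed
    have b: "Suc k * k = k * (k+1)" for k by simp
    have c: "(1 + x) * (gb (R^2) N k * R ^ (k*(k-1)) * (x * R^2) ^ k)
       = f k + gb (R^2) N k * R ^ (Suc k * k) * x ^ Suc k" for k
    proof -
      have "(1 + x) * (gb (R^2) N k * R ^ (k*(k-1)) * (x * R^2) ^ k)
          = (1 + x) * (gb (R^2) N k * (R ^ (k*(k-1)) * (x * R^2) ^ k))" by (simp only: mult.assoc)
      also have "\<dots> = (1 + x) * (gb (R^2) N k * (R ^ (k*(k+1)) * x ^ k))" by (simp only: a)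
      finally show ?thesis unfolding f_def b by (simp add: algebra_simps)
    qed
    show ?thesis unfolding sum_distrib_left c sum.distrib ..
  qed
  also have "(\<Sum>k\<le>N. f k) = (\<Sum>k\<le>Suc N. f k)" by (simp add: f_def gb_zero)
  also have "\<dots> = f 0 + (\<Sum>k\<le>N. f (Suc k))" by (rule sum.atMost_Suc_shift)
  finally have L: "(\<Prod>i<Suc N. 1 + x * R ^ (2*i)) = 1 + (\<Sum>k\<le>N. f (Suc k) + gb (R^2) N k * R ^ (Suc k * k) * x ^ Suc k)"
    by (simp add: f_def sum.distrib add.assoc)
  have "(\<Sum>k\<le>Suc N. gb (R^2) (Suc N) k * R ^ (k*(k-1)) * x ^ k)
       = 1 + (\<Sum>k\<le>N. gb (R^2) (Suc N) (Suc k) * R ^ (Suc k * k) * x ^ Suc k)"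
    unfolding sum.atMost_Suc_shift by (simp del: gb.simps add: mult.commute)
  also have "\<dots> = 1 + (\<Sum>k\<le>N. f (Suc k) + gb (R^2) N k * R ^ (Suc k * k) * x ^ Suc k)"
  proof -
    have "(R^2) ^ Suc k * R ^ (Suc k * k) = R ^ (Suc k * (Suc k + 1))" for k
    proof -
      have "2 * Suc k + Suc k * k = Suc k * (Suc k + 1)" by simp
      then show ?thesis by (metis power_add power_mult)
    qed
    note h = this
    have "gb (R^2) (Suc N) (Suc k) * R ^ (Suc k * k) * x ^ Suc k
        = f (Suc k) + gb (R^2) N k * R ^ (Suc k * k) * x ^ Suc k" for k
    proof -
      have "gb (R^2) (Suc N) (Suc k) * R ^ (Suc k * k) * x ^ Suc k
          = gb (R^2) N (Suc k) * ((R^2) ^ Suc k * R ^ (Suc k * k)) * x ^ Suc k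
            + gb (R^2) N k * R ^ (Suc k * k) * x ^ Suc k"
        by (simp only: gb.simps) (simp only: ring_distribs mult_ac)
      then show ?thesis unfolding f_def h by simp
    qed
    then show ?thesis by simp
  qed
  finally show ?case using L by simp
qed

lemma prodneg:
  fixes z R :: complex
  assumes z: "z \<noteq> 0" and R: "R \<noteq> 0"
  shows "(\<Prod>m<n. 1 + inverse z * R powi (- 2 * int m))
       = z powi (- int n) * R powi (- (int n * (int n - 1))) * (\<Prod>m<n. 1 + z * R ^ (2*m))"
proof (induction n)
  case 0 then show ?case by simp
next
  case (Suc n)
  have f: "1 + inverse z * R powi (- 2 * int n) = z powi (-1) * R powi (- 2 * int n) * (1 + z * R ^ (2*n))"
  proof -
    have "z powi (-1) * R powi (- 2 * int n) * (z * R ^ (2*n))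
        = (z powi (-1) * z) * (R powi (- 2 * int n) * R powi (int (2*n)))"
      by (simp only: power_int_of_nat mult_ac)
    also have "\<dots> = 1"
      using z R by (simp add: power_int_add[symmetric] power_int_minus)
    finally have "z powi (-1) * R powi (- 2 * int n) * (z * R ^ (2*n)) = 1" .
    then show ?thesis by (simp add: algebra_simps power_int_minus)
  qed
  have "(\<Prod>m<Suc n. 1 + inverse z * R powi (- 2 * int m))
      = z powi (- int n) * R powi (- (int n * (int n - 1))) * (\<Prod>m<n. 1 + z * R ^ (2*m))
        * (z powi (-1) * R powi (- 2 * int n) * (1 + z * R ^ (2*n)))"
    using Suc f by simp
  also have "\<dots> = (z powi (- int n) * z powi (-1)) * (R powi (- (int n * (int n - 1))) * R powi (- 2 * int n))
        * ((\<Prod>m<n. 1 + z * R ^ (2*m)) * (1 + z * R ^ (2*n)))"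
    by (simp only: mult_ac)
  also have "\<dots> = z powi (- int (Suc n)) * R powi (- (int (Suc n) * (int (Suc n) - 1)))
        * (\<Prod>m<Suc n. 1 + z * R ^ (2*m))"
  proof -
    have "z powi (- int (Suc n)) = z powi (- int n + (-1))" by (simp add: algebra_simps)
    also have "\<dots> = z powi (- int n) * z powi (-1)" using z by (rule power_int_add[OF disjI1])
    finally have 1: "z powi (- int n) * z powi (-1) = z powi (- int (Suc n))" ..
    have "R powi (- (int (Suc n) * (int (Suc n) - 1))) = R powi (- (int n * (int n - 1)) + (- 2 * int n))"
      by (simp add: algebra_simps)
    also have "\<dots> = R powi (- (int n * (int n - 1))) * R powi (- 2 * int n)" using R by (rule power_int_add[OF disjI1])
    finally have 2: "R powi (- (int n * (int n - 1))) * R powi (- 2 * int n) = R powi (- (int (Suc n) * (int (Suc n) - 1)))" ..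
    note 1 2
    show ?thesis using 1 2 by simp
  qed
  finally show ?case .
qed

lemma pim: "(x::complex) \<noteq> 0 \<Longrightarrow> x powi a * x powi b = x powi (a + b)"
  by (simp add: power_int_add)

lemma fin_jtp:
  fixes z R :: complex
  assumes z: "z \<noteq> 0" and R: "R \<noteq> 0"
  shows "(\<Prod>m<n. (1 + z * R ^ (2*m)) * (1 + inverse z * R ^ (2*m+2)))
       = (\<Sum>k\<le>2*n. gb (R^2) (2*n) k * (z powi (int n - int k) * R powi ((int n - int k) * (int n - int k - 1))))"
proof -
  define x where "x = inverse z * R powi (2 - 2 * int n)"
  define g where "g i = 1 + inverse z * R powi (2 * int i + 2 - 2 * int n)" for i :: nat
  have P1: "(\<Prod>i<2*n. 1 + x * R ^ (2*i)) = (\<Prod>i<2*n. g i)"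
  proof (rule prod.cong)
    fix i assume "i \<in> {..<2*n}"
    have "x * R ^ (2*i) = inverse z * (R powi (2 - 2 * int n) * R powi (int (2*i)))"
      unfolding x_def power_int_of_nat by (simp only: mult_ac)
    also have "\<dots> = inverse z * R powi (2 * int i + 2 - 2 * int n)"
      using R by (simp add: pim algebra_simps)
    finally show "1 + x * R ^ (2*i) = g i" unfolding g_def by simp
  qed simp
  have P2: "(\<Prod>i<2*n. g i) = (\<Prod>i<n. g i) * (\<Prod>i<n. g (i + n))"
  proof -
    have "(\<Prod>i<2*n. g i) = (\<Prod>i\<in>{0..<n}. g i) * (\<Prod>i\<in>{n..<2*n}. g i)"
      by (simp add: prod.atLeastLessThan_concat atLeast0LessThan[symmetric])
    also have "(\<Prod>i\<in>{n..<2*n}. g i) = (\<Prod>i\<in>{0+n..<n+n}. g i)" by (simp add: mult_2)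
    also have "\<dots> = (\<Prod>i\<in>{0..<n}. g (i + n))" by (rule prod.shift_bounds_nat_ivl)
    finally show ?thesis by (simp add: atLeast0LessThan)
  qed
  have P3: "(\<Prod>i<n. g (i + n)) = (\<Prod>m<n. 1 + inverse z * R ^ (2*m+2))"
  proof (rule prod.cong)
    fix i assume "i \<in> {..<n}"
    have "R powi (2 * int (i + n) + 2 - 2 * int n) = R powi (int (2*i+2))" by (simp add: algebra_simps)
    then show "g (i + n) = 1 + inverse z * R ^ (2*i+2)" unfolding g_def power_int_of_nat by simp
  qed simp
  have P4: "(\<Prod>i<n. g i) = (\<Prod>m<n. 1 + inverse z * R powi (- 2 * int m))"
  proof -
    have "(\<Prod>i<n. g i) = (\<Prod>i\<in>{0..<n}. g i)" by (simp add: atLeast0LessThan)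
    also have "\<dots> = (\<Prod>i\<in>{0..<n}. g (n + 0 - Suc i))"
      by (rule prod.atLeastLessThan_rev)
    also have "\<dots> = (\<Prod>m<n. 1 + inverse z * R powi (- 2 * int m))"
    proof (rule prod.cong)
      fix i assume "i \<in> {..<n}"
      then have "int (n + 0 - Suc i) = int n - 1 - int i" by auto
      then show "g (n + 0 - Suc i) = 1 + inverse z * R powi (- 2 * int i)"
        unfolding g_def by (simp add: algebra_simps)
    qed (simp add: atLeast0LessThan)
    finally show ?thesis .
  qed
  have Q: "(\<Prod>i<2*n. 1 + x * R ^ (2*i)) = z powi (- int n) * R powi (- (int n * (int n - 1)))
        * (\<Prod>m<n. (1 + z * R ^ (2*m)) * (1 + inverse z * R ^ (2*m+2)))"
    unfolding P1 P2 P3 P4 prodneg[OF z R] prod.distrib by (simp only: mult_ac)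
  have zz: "z powi int n * z powi (- int n) = 1" using z by (subst pim) auto
  have RR: "R powi (int n * (int n - 1)) * R powi (- (int n * (int n - 1))) = 1" using R by (subst pim) auto
  have "(\<Prod>m<n. (1 + z * R ^ (2*m)) * (1 + inverse z * R ^ (2*m+2)))
      = z powi int n * R powi (int n * (int n - 1)) * (\<Prod>i<2*n. 1 + x * R ^ (2*i))"
    unfolding Q using zz RR by (simp add: algebra_simps)
  also have "\<dots> = z powi int n * R powi (int n * (int n - 1)) * (\<Sum>k\<le>2*n. gb (R^2) (2*n) k * R ^ (k*(k-1)) * x ^ k)"
    by (simp only: qbinom)
  also have "\<dots> = (\<Sum>k\<le>2*n. gb (R^2) (2*n) k * (z powi int n * R powi (int n * (int n - 1)) * R ^ (k*(k-1)) * x ^ k))"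
    by (simp add: sum_distrib_left algebra_simps)
  also have "\<dots> = (\<Sum>k\<le>2*n. gb (R^2) (2*n) k * (z powi (int n - int k) * R powi ((int n - int k) * (int n - int k - 1))))"
  proof (rule sum.cong)
    fix k assume "k \<in> {..2*n}"
    have k1: "R ^ (k*(k-1)) = R powi (int k * (int k - 1))"
    proof -
      have "int (k*(k-1)) = int k * (int k - 1)" by (cases k) (auto simp: algebra_simps)
      then show ?thesis by (metis power_int_of_nat)
    qed
    have xk: "x ^ k = z powi (- int k) * R powi ((2 - 2 * int n) * int k)"
      unfolding x_def power_mult_distrib power_int_power' by (simp add: power_int_minus power_inverse)
    have "z powi int n * R powi (int n * (int n - 1)) * R ^ (k*(k-1)) * x ^ k
        = (z powi int n * z powi (- int k)) * ((R powi (int n * (int n - 1)) * R powi (int k * (int k - 1))) * R powi ((2 - 2 * int n) * int k))"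
      unfolding k1 xk by (simp only: mult_ac)
    also have "\<dots> = z powi (int n - int k) * R powi ((int n - int k) * (int n - int k - 1))"
    proof -
      have a: "z powi int n * z powi (- int k) = z powi (int n - int k)" using z by (subst pim) auto
      have "R powi (int n * (int n - 1)) * R powi (int k * (int k - 1)) * R powi ((2 - 2 * int n) * int k)
          = R powi (int n * (int n - 1) + int k * (int k - 1) + (2 - 2 * int n) * int k)"
        by (simp only: pim[OF R])
      also have "\<dots> = R powi ((int n - int k) * (int n - int k - 1))"
        by (rule arg_cong[where f="power_int R"]) (simp add: algebra_simps)
      finally show ?thesis using a by simp
    qed
    finally show "gb (R^2) (2*n) k * (z powi int n * R powi (int n * (int n - 1)) * R ^ (k*(k-1)) * x ^ k)
       = gb (R^2) (2*n) k * (z powi (int n - int k) * R powi ((int n - int k) * (int n - int k - 1)))" by simp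
  qed simp
  finally show ?thesis .
qed

lemma conv_geo:
  fixes a Q :: complex
  assumes "norm Q < 1"
  shows "convergent_prod (\<lambda>i. 1 + a * Q ^ i)"
proof -
  have "summable (\<lambda>i. norm a * norm Q ^ i)"
    using assms by (intro summable_mult summable_geometric) auto
  then have "summable (\<lambda>i. norm ((1 + a * Q ^ i) - 1))"
    by (simp add: norm_mult norm_power)
  then show ?thesis
    by (intro abs_convergent_prod_imp_convergent_prod summable_imp_abs_convergent_prod)
qed

lemma conv_prod_lessThan:
  fixes f :: "nat \<Rightarrow> complex"
  assumes "convergent_prod f"
  shows "(\<lambda>N. \<Prod>i<N. f i) \<longlonglongrightarrow> prodinf f"
proof -
  have "(\<lambda>n. \<Prod>i\<le>n. f i) \<longlonglongrightarrow> prodinf f" by (rule convergent_prod_LIMSEQ[OF assms])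
  then have "(\<lambda>n. \<Prod>i<Suc n. f i) \<longlonglongrightarrow> prodinf f" by (simp add: lessThan_Suc_atMost)
  then show ?thesis by (rule LIMSEQ_imp_Suc)
qed

definition qinf :: "complex \<Rightarrow> complex" where
  "qinf Q = prodinf (\<lambda>i. 1 - Q ^ Suc i)"

lemma qfac_lim:
  assumes "norm Q < 1"
  shows "qfac Q \<longlonglongrightarrow> qinf Q" "qinf Q \<noteq> 0" "\<And>N. qfac Q N \<noteq> 0"
proof -
  have c: "convergent_prod (\<lambda>i. 1 - Q ^ Suc i)"
    using conv_geo[OF assms, of "-Q"] by simp
  show "qfac Q \<longlonglongrightarrow> qinf Q"
    unfolding qfac_def[abs_def] qinf_def by (rule conv_prod_lessThan[OF c])
  have nz: "1 - Q ^ Suc i \<noteq> 0" for i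
  proof
    assume "1 - Q ^ Suc i = 0"
    then have "Q ^ Suc i = 1" by simp
    then have "norm (Q ^ Suc i) = 1" by simp
    moreover have "norm (Q ^ Suc i) < 1"
      unfolding norm_power using assms by (simp only: power_less_one_iff norm_ge_zero) simp
    ultimately show False by simp
  qed
  show "qinf Q \<noteq> 0" unfolding qinf_def by (rule prodinf_nonzero[OF c nz])
  show "qfac Q N \<noteq> 0" for N unfolding qfac_def using nz by simp
qed

lemma lower_bound_seq:
  fixes f :: "nat \<Rightarrow> complex"
  assumes "f \<longlonglongrightarrow> L" "L \<noteq> 0" "\<And>n. f n \<noteq> 0"
  shows "\<exists>c>0. \<forall>n. c \<le> norm (f n)"
proof -
  have "(\<lambda>n. norm (f n)) \<longlonglongrightarrow> norm L" by (intro tendsto_intros assms)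
  moreover have "norm L / 2 < norm L" using assms by simp
  ultimately have "eventually (\<lambda>n. norm L / 2 < norm (f n)) sequentially"
    by (rule order_tendstoD)
  then obtain N where N: "\<And>n. n \<ge> N \<Longrightarrow> norm L / 2 < norm (f n)"
    by (auto simp: eventually_sequentially)
  define c where "c = Min (insert (norm L / 2) ((\<lambda>n. norm (f n)) ` {..<N}))"
  have "c > 0" unfolding c_def using assms by (subst Min_gr_iff) auto
  moreover have "c \<le> norm (f n)" for n
  proof (cases "n < N")
    case True then show ?thesis unfolding c_def by (intro Min_le) auto
  next
    case False
    then have "norm L / 2 \<le> norm (f n)" using N[of n] by simp
    moreover have "c \<le> norm L / 2" unfolding c_def by (intro Min_le) auto
    ultimately show ?thesis by simp
  qed
  ultimately show ?thesis by blast
qed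

lemma gb_bound:
  assumes "norm Q < 1"
  shows "\<exists>B. \<forall>N k. norm (gb Q N k) \<le> B"
proof -
  note ql = qfac_lim[OF assms]
  obtain c where c: "c > 0" "\<And>n. c \<le> norm (qfac Q n)"
    using lower_bound_seq[OF ql(1) ql(2) ql(3)] by blast
  have "bounded (range (qfac Q))"
    using ql(1) by (intro convergent_imp_bounded) 
  then obtain U where U: "\<And>n. norm (qfac Q n) \<le> U"
    unfolding bounded_iff by auto
  have "norm (gb Q N k) \<le> U / (c * c)" for N k
  proof (cases "k \<le> N")
    case True
    have e: "gb Q N k = qfac Q N / (qfac Q k * qfac Q (N - k))"
      using gb_closed[OF True, of Q] ql(3) by (simp add: field_simps)
    have ge: "norm (qfac Q k * qfac Q (N - k)) \<ge> c * c"
      unfolding norm_mult using c by (intro mult_mono) auto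
    have cc: "0 < c * c" using c by simp
    then have pos: "0 < norm (qfac Q k * qfac Q (N - k)) * (c * c)" using ge by (meson less_le_trans mult_pos_pos)
    then have "norm (gb Q N k) \<le> norm (qfac Q N) / (c * c)"
      unfolding e norm_divide using ge pos by (intro divide_left_mono) auto
    also have "\<dots> \<le> U / (c * c)" using U c by (intro divide_right_mono) auto
    finally show ?thesis .
  next
    case False
    have "0 \<le> U" using U[of 0] norm_ge_zero order_trans by blast
    then show ?thesis using False c by (simp add: gb_zero)
  qed
  then show ?thesis by blast
qed

lemma infsum_int_as_suminf:
  fixes f :: "int \<Rightarrow> complex"
  assumes "summable (\<lambda>k. norm (f (int_decode k)))"
  shows "infsum f UNIV = (\<Sum>k. f (int_decode k))"
proof -
  have "summable (\<lambda>k. f (int_decode k))" using assms by (rule summable_norm_cancel)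
  then have "(\<lambda>k. f (int_decode k)) sums (\<Sum>k. f (int_decode k))" by (rule summable_sums)
  then have "((\<lambda>k. f (int_decode k)) has_sum (\<Sum>k. f (int_decode k))) UNIV"
    using assms by (intro norm_summable_imp_has_sum) auto
  then have "infsum (\<lambda>k. f (int_decode k)) UNIV = (\<Sum>k. f (int_decode k))" by (rule infsumI)
  moreover have "infsum (\<lambda>k. f (int_decode k)) UNIV = infsum f UNIV"
    by (rule infsum_reindex_bij_betw[OF bij_int_decode])
  ultimately show ?thesis by simp
qed

lemma dom_conv_int:
  fixes a :: "nat \<Rightarrow> int \<Rightarrow> complex" and b :: "int \<Rightarrow> complex" and M :: "int \<Rightarrow> real"
  assumes lim: "\<And>j. (\<lambda>n. a n j) \<longlonglongrightarrow> b j"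
    and bd: "\<And>n j. norm (a n j) \<le> M j"
    and sM: "M summable_on UNIV"
  shows "(\<lambda>n. infsum (a n) UNIV) \<longlonglongrightarrow> infsum b UNIV"
proof -
  have "(\<lambda>k. M (int_decode k)) summable_on UNIV"
    using sM by (subst summable_on_reindex_bij_betw[OF bij_int_decode])
  then have sMn: "summable (\<lambda>k. M (int_decode k))" by (rule summable_on_imp_summable)
  have T: "eventually (\<lambda>n. summable (\<lambda>k. norm (a n (int_decode k)))) sequentially \<and>
           summable (\<lambda>k. norm (b (int_decode k))) \<and>
           ((\<lambda>n. suminf (\<lambda>k. a n (int_decode k))) \<longlongrightarrow> suminf (\<lambda>k. b (int_decode k))) sequentially"
    by (rule tannerys_theorem[where M = "\<lambda>k. M (int_decode k)"])
       (use lim bd sMn in \<open>auto intro!: always_eventually\<close>)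
  have sa: "summable (\<lambda>k. norm (a n (int_decode k)))" for n
    by (rule summable_comparison_test[OF _ sMn]) (use bd in auto)
  have "infsum (a n) UNIV = (\<Sum>k. a n (int_decode k))" for n
    by (rule infsum_int_as_suminf[OF sa])
  moreover have "infsum b UNIV = (\<Sum>k. b (int_decode k))"
    using T by (intro infsum_int_as_suminf) auto
  ultimately show ?thesis using T by simp
qed

lemma filterlim_nat_shift:
  fixes j :: int
  shows "filterlim (\<lambda>n::nat. nat (int n + j)) sequentially sequentially"
  unfolding filterlim_at_top eventually_sequentially
proof (intro allI)
  fix Z :: nat
  show "\<exists>N. \<forall>n\<ge>N. Z \<le> nat (int n + j)"
    by (rule exI[of _ "Z + nat \<bar>j\<bar>"]) auto
qed

theorem jtp:
  fixes z R :: complex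
  assumes z: "z \<noteq> 0" and R: "R \<noteq> 0" and nR: "norm R < 1"
    and summ: "(\<lambda>j::int. norm (z powi j * R powi (j*(j-1)))) summable_on UNIV"
  shows "(\<lambda>n. \<Prod>m<n. (1 + z * R ^ (2*m)) * (1 + inverse z * R ^ (2*m+2)))
           \<longlonglongrightarrow> infsum (\<lambda>j. z powi j * R powi (j*(j-1))) UNIV / qinf (R^2)"
proof -
  define Q where "Q = R^2"
  have nQ: "norm Q < 1" unfolding Q_def norm_power using nR
    by (simp add: power_less_one_iff)
  define t where "t j = z powi j * R powi (j*(j-1))" for j :: int
  define L where "L = qinf Q"
  note ql = qfac_lim[OF nQ]
  define a where "a n j = (if \<bar>j\<bar> \<le> int n then gb Q (2*n) (nat (int n - j)) * t j else 0)" for n :: nat and j :: int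
  have P: "(\<Prod>m<n. (1 + z * R ^ (2*m)) * (1 + inverse z * R ^ (2*m+2))) = infsum (a n) UNIV" for n
  proof -
    have "(\<Prod>m<n. (1 + z * R ^ (2*m)) * (1 + inverse z * R ^ (2*m+2)))
        = (\<Sum>k\<le>2*n. gb Q (2*n) k * t (int n - int k))"
      unfolding fin_jtp[OF z R] t_def Q_def by simp
    also have "\<dots> = (\<Sum>j\<in>{-int n..int n}. a n j)"
    proof (rule sum.reindex_bij_witness[where i = "\<lambda>j. nat (int n - j)" and j = "\<lambda>k. int n - int k"])
      fix j assume "j \<in> {-int n..int n}"
      then show "int n - int (nat (int n - j)) = j" "nat (int n - j) \<in> {..2*n}" by auto
    next
      fix k assume k: "k \<in> {..2*n}"
      then show "nat (int n - (int n - int k)) = k" "int n - int k \<in> {-int n..int n}" by auto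
      show "a n (int n - int k) = gb Q (2*n) k * t (int n - int k)"
        using k unfolding a_def by auto
    qed
    also have "\<dots> = infsum (a n) UNIV"
      by (rule infsum_finite[symmetric, THEN trans], simp, rule infsum_cong_neutral) (auto simp: a_def)
    finally show ?thesis .
  qed
  obtain B where B: "\<And>N k. norm (gb Q N k) \<le> B" using gb_bound[OF nQ] by blast
  have B0: "0 \<le> B" using B[of 0 0] by simp
  have bd: "norm (a n j) \<le> B * norm (t j)" for n j
    unfolding a_def using B B0 by (auto simp: norm_mult intro: mult_right_mono)
  have sM: "(\<lambda>j. B * norm (t j)) summable_on UNIV"
    using summ unfolding t_def by (rule summable_on_cmult_right)
  have lim: "(\<lambda>n. a n j) \<longlonglongrightarrow> t j * inverse L" for j
  proof -
    have ev: "eventually (\<lambda>n. qfac Q (nat (int n + 2*0 + n)) / (qfac Q (nat (int n + (- j))) * qfac Q (nat (int n + j))) * t j = a n j) sequentially"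
      unfolding eventually_sequentially
    proof (intro exI[of _ "nat \<bar>j\<bar>"] allI impI)
      fix n assume n: "nat \<bar>j\<bar> \<le> n"
      then have k: "nat (int n - j) \<le> 2*n" and e: "2*n - nat (int n - j) = nat (int n + j)" by auto
      have "gb Q (2*n) (nat (int n - j)) = qfac Q (2*n) / (qfac Q (nat (int n - j)) * qfac Q (nat (int n + j)))"
        using gb_closed[OF k, of Q] ql(3) unfolding e by (simp add: field_simps)
      moreover have "nat (int n + 2*0 + n) = 2*n" by simp
      ultimately show "qfac Q (nat (int n + 2*0 + n)) / (qfac Q (nat (int n + (- j))) * qfac Q (nat (int n + j))) * t j = a n j"
        using n unfolding a_def by auto
    qed
    have l1: "(\<lambda>n. qfac Q (nat (int n + 2*0 + n))) \<longlonglongrightarrow> L"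
    proof -
      have "filterlim (\<lambda>n::nat. nat (int n + 2*0 + n)) sequentially sequentially"
        by (rule filterlim_subseq) (auto simp: strict_mono_def)
      from filterlim_compose[OF ql(1) this] show ?thesis unfolding L_def .
    qed
    have l2: "(\<lambda>n. qfac Q (nat (int n + i))) \<longlonglongrightarrow> L" for i
      unfolding L_def by (rule filterlim_compose[OF ql(1) filterlim_nat_shift[of i]])
    have "(\<lambda>n. qfac Q (nat (int n + 2*0 + n)) / (qfac Q (nat (int n + (- j))) * qfac Q (nat (int n + j))) * t j)
        \<longlonglongrightarrow> L / (L * L) * t j"
      using ql(2) unfolding L_def[symmetric] by (intro tendsto_intros l1 l2) auto
    moreover have "L / (L * L) * t j = t j * inverse L" using ql(2) unfolding L_def
      by (simp add: field_simps)
    moreover have "L \<noteq> 0" unfolding L_def by (rule ql(2))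
    ultimately show ?thesis using ev by (simp add: tendsto_cong)
  qed
  have "(\<lambda>n. infsum (a n) UNIV) \<longlonglongrightarrow> infsum (\<lambda>j. t j * inverse L) UNIV"
    by (rule dom_conv_int[OF lim bd sM])
  also have "infsum (\<lambda>j. t j * inverse L) UNIV = infsum t UNIV / L"
    by (simp add: infsum_cmult_left' divide_inverse)
  finally show ?thesis unfolding P[symmetric] t_def L_def Q_def .
qed

lemma geo_int_summable:
  fixes r :: real
  assumes "0 \<le> r" "r < 1"
  shows "(\<lambda>j::int. r ^ nat \<bar>j\<bar>) summable_on UNIV"
proof -
  have s1: "(\<lambda>n::nat. r ^ n) summable_on UNIV"
    using assms by (subst summable_on_UNIV_nonneg_real_iff) (auto intro: summable_geometric)
  have s2: "(\<lambda>n::nat. r * r ^ n) summable_on UNIV"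
    using s1 by (rule summable_on_cmult_right)
  have A: "(\<lambda>j::int. r ^ nat \<bar>j\<bar>) summable_on (int ` UNIV)"
    by (subst summable_on_reindex) (use s1 in \<open>auto simp: o_def\<close>)
  have B: "(\<lambda>j::int. r ^ nat \<bar>j\<bar>) summable_on ((\<lambda>n. - int n - 1) ` UNIV)"
  proof (subst summable_on_reindex)
    show "inj_on (\<lambda>n. - int n - 1) UNIV" by (auto simp: inj_on_def)
    have "nat \<bar>- int n - 1\<bar> = Suc n" for n by simp
    then show "((\<lambda>j::int. r ^ nat \<bar>j\<bar>) \<circ> (\<lambda>n. - int n - 1)) summable_on UNIV"
      using s2 by (simp add: o_def)
  qed
  have U: "UNIV = int ` UNIV \<union> (\<lambda>n. - int n - 1) ` UNIV"
  proof -
    have "j \<in> int ` UNIV \<union> (\<lambda>n. - int n - 1) ` UNIV" for j :: int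
    proof (cases "j \<ge> 0")
      case True then show ?thesis by (auto intro: image_eqI[of _ _ "nat j"])
    next
      case False then show ?thesis by (auto intro!: image_eqI[of _ _ "nat (- j - 1)"])
    qed
    then show ?thesis by auto
  qed
  have "int ` UNIV \<inter> (\<lambda>n. - int n - 1) ` UNIV = {}" by auto
  then show ?thesis by (subst U, intro summable_on_Un_disjoint A B)
qed

lemma quad_bound:
  fixes \<alpha> \<beta> j :: int
  assumes "\<alpha> \<ge> 1"
  shows "\<alpha> * j * j + \<beta> * j \<ge> \<bar>j\<bar> - (\<bar>\<beta>\<bar> + 1)^2"
proof -
  define b where "b = \<bar>\<beta>\<bar> + 1"
  define a where "a = \<bar>j\<bar>"
  have b0: "b \<ge> 1" unfolding b_def by simp
  have a0: "a \<ge> 0" unfolding a_def by simp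
  have jj: "j * j = a * a" unfolding a_def by (simp add: abs_mult_self_eq)
  have 1: "\<alpha> * j * j \<ge> a * a"
  proof -
    have "0 \<le> j * j" by simp
    then have "\<alpha> * (j * j) \<ge> 1 * (j * j)" using assms by (intro mult_right_mono) auto
    then show ?thesis using jj by (simp add: mult.assoc)
  qed
  have 2: "\<beta> * j \<ge> - (\<bar>\<beta>\<bar> * a)"
  proof -
    have "\<bar>\<beta> * j\<bar> = \<bar>\<beta>\<bar> * a" unfolding a_def by (rule abs_mult)
    moreover have "- \<bar>\<beta> * j\<bar> \<le> \<beta> * j" by linarith
    ultimately show ?thesis by linarith
  qed
  have 3: "a * a - b * a \<ge> - (b * b)"
  proof (cases "a \<le> b")
    case True
    have "a * (b - a) \<le> b * b"
      using True b0 a0 by (intro mult_mono) auto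
    then show ?thesis by (simp add: algebra_simps)
  next
    case False
    then have "a * (a - b) \<ge> 0" using a0 by simp
    moreover have "a * (a - b) = a * a - b * a" by (simp add: algebra_simps)
    moreover have "0 \<le> b * b" by simp
    ultimately show ?thesis by linarith
  qed
  have 4: "b * a = \<bar>\<beta>\<bar> * a + a" unfolding b_def by (simp add: algebra_simps)
  have 5: "(\<bar>\<beta>\<bar> + 1)^2 = b * b" unfolding b_def by (simp add: power2_eq_square)
  show ?thesis unfolding 5 a_def[symmetric] using 1 2 3 4 by linarith
qed

lemma quad_summable:
  fixes q :: complex and \<alpha> \<beta> :: int
  assumes q: "q \<noteq> 0" "norm q < 1" and a: "\<alpha> \<ge> 1"
  shows "(\<lambda>j::int. norm (q powi (\<alpha> * j * j + \<beta> * j))) summable_on UNIV"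
proof -
  define r where "r = norm q"
  define K where "K = (\<bar>\<beta>\<bar> + 1)^2"
  have r: "0 < r" "r < 1" using q unfolding r_def by auto
  have "(\<lambda>j::int. r powi (- K) * r ^ nat \<bar>j\<bar>) summable_on UNIV"
    using geo_int_summable[of r] r by (intro summable_on_cmult_right) auto
  then show ?thesis
  proof (rule summable_on_comparison_test)
    fix j :: int
    have "norm (q powi (\<alpha> * j * j + \<beta> * j)) = r powi (\<alpha> * j * j + \<beta> * j)"
      unfolding r_def by (simp add: norm_power_int)
    also have "\<dots> \<le> r powi (\<bar>j\<bar> - K)"
      using quad_bound[OF a, of j \<beta>] r unfolding K_def by (intro power_int_decreasing) auto
    also have "\<dots> = r powi (- K) * r ^ nat \<bar>j\<bar>"
    proof -
      have "r powi (\<bar>j\<bar> - K) = r powi (- K + int (nat \<bar>j\<bar>))" by simp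
      also have "\<dots> = r powi (- K) * r powi int (nat \<bar>j\<bar>)" using r by (intro power_int_add) auto
      also have "\<dots> = r powi (- K) * r ^ nat \<bar>j\<bar>" by (simp only: power_int_of_nat)
      finally show ?thesis .
    qed
    finally show "norm (q powi (\<alpha> * j * j + \<beta> * j)) \<le> r powi (- K) * r ^ nat \<bar>j\<bar>" .
  qed auto
qed

lemma prod_has_sum:
  fixes f g :: "'a \<Rightarrow> complex"
  assumes f: "(\<lambda>x. norm (f x)) summable_on A" and g: "(\<lambda>x. norm (g x)) summable_on B"
  shows "((\<lambda>(x,y). f x * g y) has_sum (infsum f A * infsum g B)) (A \<times> B)"
proof -
  define h where "h = (\<lambda>(x,y). f x * g y)"
  have "(\<lambda>x. norm (h x)) summable_on (A \<times> B)"
  proof (subst Infinite_Sum.abs_summable_on_Sigma_iff, intro conjI ballI)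
    fix x assume "x \<in> A"
    show "(\<lambda>y. norm (h (x, y))) summable_on B"
      unfolding h_def using g by (simp add: norm_mult summable_on_cmult_right)
  next
    have "(\<lambda>x. norm (infsum (\<lambda>y. norm (h (x, y))) B)) = (\<lambda>x. norm (f x) * infsum (\<lambda>y. norm (g y)) B)"
    proof
      fix x
      have "infsum (\<lambda>y. norm (h (x, y))) B = norm (f x) * infsum (\<lambda>y. norm (g y)) B"
        unfolding h_def by (simp add: norm_mult infsum_cmult_right')
      moreover have "0 \<le> infsum (\<lambda>y. norm (g y)) B" by (rule infsum_nonneg) simp
      ultimately show "norm (infsum (\<lambda>y. norm (h (x, y))) B) = norm (f x) * infsum (\<lambda>y. norm (g y)) B"
        by simp
    qed
    then show "(\<lambda>x. norm (infsum (\<lambda>y. norm (h (x, y))) B)) summable_on A"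
      using f by (simp add: summable_on_cmult_left)
  qed
  then have hs: "h summable_on (A \<times> B)" by (rule abs_summable_summable)
  have "infsum h (A \<times> B) = infsum (\<lambda>x. infsum (\<lambda>y. h (x, y)) B) A"
    using infsum_Sigma_banach[of h A "\<lambda>_. B"] hs by simp
  also have "\<dots> = infsum (\<lambda>x. f x * infsum g B) A"
    unfolding h_def by (simp add: infsum_cmult_right')
  also have "\<dots> = infsum f A * infsum g B" by (simp add: infsum_cmult_left')
  finally show ?thesis using hs unfolding h_def
    by (metis has_sum_infsum)
qed

definition sg :: "int \<Rightarrow> complex" where "sg k = (-1) powi k"

lemma sg_add: "sg (a + b) = sg a * sg b"
  unfolding sg_def by (simp add: power_int_add)

lemma sg_minus: "sg (- a) = sg a"
proof -
  have "sg (- a) = inverse ((-1) powi a)" unfolding sg_def by (simp add: power_int_minus)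
  also have "\<dots> = (inverse (-1)) powi a" by (rule power_int_inverse[symmetric])
  also have "\<dots> = sg a" unfolding sg_def by simp
  finally show ?thesis .
qed

lemma sg_one: "sg 1 = -1" unfolding sg_def by simp

lemma norm_sg: "norm (sg k) = 1" unfolding sg_def by (simp add: norm_power_int)

lemma series_identity:
  fixes q :: complex
  assumes q: "q \<noteq> 0" "norm q < 1"
  defines "a \<equiv> \<lambda>j. sg j * q powi (4 * j * j + (-1) * j)"
    and "b \<equiv> \<lambda>j. sg j * q powi (4 * j * j + (-3) * j)"
    and "c \<equiv> \<lambda>j. q powi (2 * j * j + 0 * j)"
    and "d \<equiv> \<lambda>j. sg j * q powi (2 * j * j + (-1) * j)"
  shows "(infsum a UNIV)^2 - q * (infsum b UNIV)^2 = infsum c UNIV * infsum d UNIV"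
proof -
  have abs: "(\<lambda>j. norm (sg j * q powi (\<alpha> * j * j + \<beta> * j))) summable_on UNIV"
    "(\<lambda>j. norm (q powi (\<alpha> * j * j + \<beta> * j))) summable_on UNIV" if "\<alpha> \<ge> 1" for \<alpha> \<beta>
    using quad_summable[OF q that, of \<beta>] by (simp_all add: norm_mult norm_sg)
  have sa: "(\<lambda>j. norm (a j)) summable_on UNIV" unfolding a_def by (rule abs) simp
  have sb: "(\<lambda>j. norm (b j)) summable_on UNIV" unfolding b_def by (rule abs) simp
  have sc: "(\<lambda>j. norm (c j)) summable_on UNIV" unfolding c_def by (rule abs) simp
  have sd: "(\<lambda>j. norm (d j)) summable_on UNIV" unfolding d_def by (rule abs) simp
  define F where "F = (\<lambda>(j,k). c j * d k)"
  have Hcd: "(F has_sum (infsum c UNIV * infsum d UNIV)) (UNIV \<times> UNIV)"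
    unfolding F_def by (rule prod_has_sum[OF sc sd])
  define \<phi> where "\<phi> = (\<lambda>(m::int,n::int). (m - n, m + n))"
  define \<psi> where "\<psi> = (\<lambda>(m::int,n::int). (m - n, 1 - m - n))"
  have inj\<phi>: "inj_on \<phi> UNIV" unfolding \<phi>_def inj_on_def by auto
  have inj\<psi>: "inj_on \<psi> UNIV" unfolding \<psi>_def inj_on_def by auto
  have Haa: "((\<lambda>(m,n). a m * a n) has_sum (infsum a UNIV * infsum a UNIV)) (UNIV \<times> UNIV)"
    by (rule prod_has_sum[OF sa sa])
  have Hbb: "((\<lambda>(m,n). b m * b n) has_sum (infsum b UNIV * infsum b UNIV)) (UNIV \<times> UNIV)"
    by (rule prod_has_sum[OF sb sb])
  have e1: "F \<circ> \<phi> = (\<lambda>(m,n). a m * a n)"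
  proof (intro ext, clarify)
    fix m n :: int
    have "F (\<phi> (m, n)) = sg (m + n) * (q powi (2 * (m - n) * (m - n) + 0 * (m - n)) * q powi (2 * (m + n) * (m + n) + (-1) * (m + n)))"
      unfolding F_def \<phi>_def c_def d_def prod.case by (simp only: mult_ac)
    also have "\<dots> = sg (m + n) * q powi ((2 * (m - n) * (m - n) + 0 * (m - n)) + (2 * (m + n) * (m + n) + (-1) * (m + n)))"
      by (simp only: pim[OF q(1)])
    also have "\<dots> = (sg m * sg n) * q powi ((4 * m * m + (-1) * m) + (4 * n * n + (-1) * n))"
      unfolding sg_add by (rule arg_cong[where f="\<lambda>e. sg m * sg n * q powi e"]) (simp add: algebra_simps)
    also have "\<dots> = (sg m * sg n) * (q powi (4 * m * m + (-1) * m) * q powi (4 * n * n + (-1) * n))"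
      by (simp only: pim[OF q(1)])
    also have "\<dots> = a m * a n"
      unfolding a_def by (simp only: mult_ac)
    finally show "(F \<circ> \<phi>) (m, n) = a m * a n" by simp
  qed
  have e2: "F \<circ> \<psi> = (\<lambda>(m,n). - q * (b m * b n))"
  proof (intro ext, clarify)
    fix m n :: int
    have "F (\<psi> (m, n)) = sg (1 + (- m) + (- n)) * (q powi (2 * (m - n) * (m - n) + 0 * (m - n)) * q powi (2 * (1 - m - n) * (1 - m - n) + (-1) * (1 - m - n)))"
    proof -
      have "1 - m - n = 1 + (- m) + (- n)" by simp
      then show ?thesis unfolding F_def \<psi>_def c_def d_def prod.case by (simp only: mult_ac)
    qed
    also have "\<dots> = - (sg m * sg n) * q powi ((2 * (m - n) * (m - n) + 0 * (m - n)) + (2 * (1 - m - n) * (1 - m - n) + (-1) * (1 - m - n)))"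
      unfolding sg_add sg_minus sg_one by (simp only: pim[OF q(1)]) simp
    also have "\<dots> = - (sg m * sg n) * q powi (1 + ((4 * m * m + (-3) * m) + (4 * n * n + (-3) * n)))"
      by (rule arg_cong[where f="\<lambda>e. - (sg m * sg n) * q powi e"]) (simp add: algebra_simps)
    also have "\<dots> = - (sg m * sg n) * (q powi 1 * (q powi (4 * m * m + (-3) * m) * q powi (4 * n * n + (-3) * n)))"
      by (simp only: pim[OF q(1)])
    also have "\<dots> = - q * (b m * b n)"
      unfolding b_def by (simp add: mult_ac)
    finally show "(F \<circ> \<psi>) (m, n) = - q * (b m * b n)" by simp
  qed
  have H1: "(F has_sum (infsum a UNIV * infsum a UNIV)) (\<phi> ` UNIV)"
    using Haa unfolding has_sum_reindex[OF inj\<phi>] e1 by simp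
  have H2: "(F has_sum (- q * (infsum b UNIV * infsum b UNIV))) (\<psi> ` UNIV)"
    using has_sum_cmult_right[OF Hbb, of "-q"] unfolding has_sum_reindex[OF inj\<psi>] e2
    by (simp add: case_prod_unfold)
  have disj: "\<phi> ` UNIV \<inter> \<psi> ` UNIV = {}"
  proof -
    have "False" if "(m - n, m + n) = (m' - n', 1 - m' - n')" for m n m' n' :: int
      using that by auto presburger
    then show ?thesis unfolding \<phi>_def \<psi>_def by auto
  qed
  have cover: "\<phi> ` UNIV \<union> \<psi> ` UNIV = UNIV"
  proof -
    have "x \<in> \<phi> ` UNIV \<union> \<psi> ` UNIV" for x
    proof (cases x)
      case (Pair j k)
      show ?thesis
      proof (cases "even (j + k)")
        case True
        then obtain s where s: "j + k = 2 * s" by (rule evenE)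
        have "\<phi> (s, s - j) = (j, k)" unfolding \<phi>_def using s by auto
        then show ?thesis using Pair by (metis UNIV_I UnI1 image_eqI)
      next
        case False
        then obtain s where s: "j + k = 2 * s + 1" by (rule oddE)
        have "\<psi> (j - s, - s) = (j, k)" unfolding \<psi>_def using s by auto
        then show ?thesis using Pair by (metis UNIV_I UnI2 image_eqI)
      qed
    qed
    then show ?thesis by auto
  qed
  have "(F has_sum (infsum a UNIV * infsum a UNIV + - q * (infsum b UNIV * infsum b UNIV))) UNIV"
    using has_sum_Un_disjoint[OF H1 H2 disj] cover by simp
  moreover have "(F has_sum (infsum c UNIV * infsum d UNIV)) UNIV" using Hcd by simp
  ultimately have "infsum a UNIV * infsum a UNIV + - q * (infsum b UNIV * infsum b UNIV) = infsum c UNIV * infsum d UNIV"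
    by (rule has_sum_unique)
  then show ?thesis by (simp add: power2_eq_square)
qed

definition pp :: "complex \<Rightarrow> complex \<Rightarrow> complex" where
  "pp a Q = prodinf (\<lambda>n. 1 + a * Q ^ n)"

lemma pp_lim:
  assumes "norm Q < 1"
  shows "(\<lambda>N. \<Prod>n<N. 1 + a * Q ^ n) \<longlonglongrightarrow> pp a Q"
  unfolding pp_def by (rule conv_prod_lessThan[OF conv_geo[OF assms]])

lemma pp_nz:
  assumes "norm Q < 1" "norm a < 1"
  shows "pp a Q \<noteq> 0"
  unfolding pp_def
proof (rule prodinf_nonzero[OF conv_geo[OF assms(1)]])
  fix n
  have "norm (a * Q ^ n) < 1"
  proof -
    have "norm (a * Q ^ n) = norm a * norm Q ^ n" by (simp add: norm_mult norm_power)
    also have "\<dots> \<le> norm a * 1"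
      using assms by (intro mult_left_mono power_le_one) auto
    finally show ?thesis using assms by simp
  qed
  then show "1 + a * Q ^ n \<noteq> 0"
    by (metis add.inverse_unique norm_minus_cancel norm_one order_less_irrefl)
qed

lemma qinf_pp: "qinf Q = pp (- Q) Q"
  unfolding qinf_def pp_def by simp

lemma pp_mult_neg:
  assumes "norm Q < 1"
  shows "pp a Q * pp (- a) Q = pp (- (a^2)) (Q^2)"
proof -
  have "pp a Q * pp (- a) Q = (\<Prod>n. (1 + a * Q ^ n) * (1 + (- a) * Q ^ n))"
    unfolding pp_def by (rule prodinf_mult[OF conv_geo[OF assms] conv_geo[OF assms]])
  also have "\<dots> = pp (- (a^2)) (Q^2)"
    unfolding pp_def by (rule prodinf_cong) (simp add: algebra_simps power2_eq_square power_mult_distrib flip: power_mult)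
  finally show ?thesis .
qed

lemma interleave:
  fixes f :: "nat \<Rightarrow> complex"
  assumes m: "m > 0" and cf: "convergent_prod f"
    and cr: "\<And>r. r < m \<Longrightarrow> convergent_prod (\<lambda>n. f (m * n + r))"
  shows "prodinf f = (\<Prod>r<m. prodinf (\<lambda>n. f (m * n + r)))"
proof -
  have "((\<lambda>N. \<Prod>i<N. f i) \<circ> (\<lambda>N. N * m)) \<longlonglongrightarrow> prodinf f"
    using m by (intro LIMSEQ_subseq_LIMSEQ conv_prod_lessThan cf) (auto simp: strict_mono_def)
  moreover have "(\<Prod>i<N * m. f i) = (\<Prod>r<m. \<Prod>n<N. f (m * n + r))" for N
  proof -
    have "(\<Prod>i<N * m. f i) = (\<Prod>n<N. \<Prod>i\<in>{n*m..<n*m+m}. f i)"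
      by (rule prod.nat_group[symmetric])
    also have "\<dots> = (\<Prod>n<N. \<Prod>r<m. f (m * n + r))"
    proof (rule prod.cong[OF refl])
      fix n
      have "(\<Prod>i\<in>{0 + n*m..<m + n*m}. f i) = (\<Prod>r\<in>{0..<m}. f (r + n*m))"
        by (rule prod.shift_bounds_nat_ivl)
      then show "(\<Prod>i\<in>{n*m..<n*m+m}. f i) = (\<Prod>r<m. f (m * n + r))"
        by (simp add: atLeast0LessThan add.commute mult.commute)
    qed
    also have "\<dots> = (\<Prod>r<m. \<Prod>n<N. f (m * n + r))" by (rule prod.swap)
    finally show ?thesis .
  qed
  ultimately have "(\<lambda>N. \<Prod>r<m. \<Prod>n<N. f (m * n + r)) \<longlonglongrightarrow> prodinf f"
    by (simp add: o_def)
  moreover have "(\<lambda>N. \<Prod>r<m. \<Prod>n<N. f (m * n + r)) \<longlonglongrightarrow> (\<Prod>r<m. prodinf (\<lambda>n. f (m * n + r)))"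
    by (intro tendsto_prod conv_prod_lessThan cr) auto
  ultimately show ?thesis by (rule LIMSEQ_unique)
qed

lemma pp_split:
  assumes "norm Q < 1"
  shows "pp a Q = pp a (Q^2) * pp (a * Q) (Q^2)"
proof -
  have Q2: "norm (Q^2) < 1" using assms by (simp add: norm_power power_less_one_iff)
  have "pp a Q = (\<Prod>r<2. prodinf (\<lambda>n. 1 + a * Q ^ (2 * n + r)))"
    unfolding pp_def
  proof (rule interleave)
    fix r :: nat
    have e: "(\<lambda>n. 1 + a * Q ^ (2 * n + r)) = (\<lambda>n. 1 + (a * Q ^ r) * (Q^2) ^ n)"
      by (simp add: power_add power_mult[symmetric] mult_ac)
    show "convergent_prod (\<lambda>n. 1 + a * Q ^ (2 * n + r))"
      unfolding e by (rule conv_geo[OF Q2])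
  qed (auto intro: conv_geo[OF assms])
  also have "\<dots> = pp a (Q^2) * pp (a * Q) (Q^2)"
    unfolding pp_def by (simp add: eval_nat_numeral power_add power_mult algebra_simps)
  finally show ?thesis .
qed

lemma jtp_prod:
  fixes z R :: complex
  assumes z: "z \<noteq> 0" and R: "R \<noteq> 0" and nR: "norm R < 1"
    and summ: "(\<lambda>j::int. norm (z powi j * R powi (j*(j-1)))) summable_on UNIV"
  shows "pp z (R^2) * pp (inverse z * R^2) (R^2) * qinf (R^2) = infsum (\<lambda>j. z powi j * R powi (j*(j-1))) UNIV"
proof -
  have R2: "norm (R^2) < 1" using nR by (simp add: norm_power power_less_one_iff)
  have e: "(\<Prod>m<N. (1 + z * R ^ (2*m)) * (1 + inverse z * R ^ (2*m+2)))
      = (\<Prod>m<N. 1 + z * (R^2) ^ m) * (\<Prod>m<N. 1 + (inverse z * R^2) * (R^2) ^ m)" for N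
  proof -
    have p1: "R^(2*m) = (R^2)^m" for m by (simp only: power_mult)
    have p2: "R^(2*m+2) = R^2 * (R^2)^m" for m
      by (metis p1 power_add mult.commute)
    show ?thesis unfolding p1 p2 prod.distrib by (simp only: mult.assoc)
  qed
  have "(\<lambda>N. \<Prod>m<N. (1 + z * R ^ (2*m)) * (1 + inverse z * R ^ (2*m+2))) \<longlonglongrightarrow> pp z (R^2) * pp (inverse z * R^2) (R^2)"
    unfolding e by (intro tendsto_mult pp_lim R2)
  moreover note jtp[OF z R nR summ]
  ultimately have "pp z (R^2) * pp (inverse z * R^2) (R^2) = infsum (\<lambda>j. z powi j * R powi (j*(j-1))) UNIV / qinf (R^2)"
    by (rule LIMSEQ_unique)
  moreover have "qinf (R^2) \<noteq> 0" by (rule qfac_lim(2)[OF R2])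
  ultimately show ?thesis by (simp add: field_simps)
qed

lemma term_conv:
  fixes q \<epsilon> :: complex and s r :: nat and j :: int
  assumes q: "q \<noteq> 0"
  shows "(\<epsilon> * q^s) powi j * (q^r) powi (j*(j-1)) = \<epsilon> powi j * q powi (int r * j * j + (int s - int r) * j)"
proof -
  have "(\<epsilon> * q^s) powi j * (q^r) powi (j*(j-1)) = \<epsilon> powi j * (q powi (int s * j) * q powi (int r * (j*(j-1))))"
    by (simp add: power_int_mult_distrib power_int_power mult_ac)
  also have "\<dots> = \<epsilon> powi j * q powi (int s * j + int r * (j*(j-1)))"
    by (simp only: pim[OF q])
  also have "\<dots> = \<epsilon> powi j * q powi (int r * j * j + (int s - int r) * j)"
    by (rule arg_cong[where f="\<lambda>e. \<epsilon> powi j * q powi e"]) (simp add: algebra_simps)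
  finally show ?thesis .
qed

lemma jtp_inst:
  fixes q \<epsilon> :: complex and s r :: nat
  assumes q: "q \<noteq> 0" "norm q < 1" and r: "r \<ge> 1" and e: "\<epsilon> = 1 \<or> \<epsilon> = -1"
  shows "pp (\<epsilon> * q^s) (q^(2*r)) * pp (inverse (\<epsilon> * q^s) * q^(2*r)) (q^(2*r)) * qinf (q^(2*r))
       = infsum (\<lambda>j. \<epsilon> powi j * q powi (int r * j * j + (int s - int r) * j)) UNIV"
proof -
  have en: "\<epsilon> \<noteq> 0" "norm \<epsilon> = 1" using e by auto
  have z: "\<epsilon> * q^s \<noteq> 0" using en q by simp
  have R: "q^r \<noteq> 0" using q by simp
  have nR: "norm (q^r) < 1" using q r by (simp add: norm_power power_less_one_iff)
  have "(\<lambda>j::int. norm (q powi (int r * j * j + (int s - int r) * j))) summable_on UNIV"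
    using r by (intro quad_summable q) auto
  then have summ: "(\<lambda>j::int. norm ((\<epsilon> * q^s) powi j * (q^r) powi (j*(j-1)))) summable_on UNIV"
    unfolding term_conv[OF q(1)] by (simp add: norm_mult norm_power_int en)
  have "(q^r)^2 = q^(2*r)" by (simp add: power_mult[symmetric] mult.commute)
  then show ?thesis using jtp_prod[OF z R nR summ] unfolding term_conv[OF q(1)] by simp
qed

lemma core:
  fixes q :: complex
  assumes q: "q \<noteq> 0" "norm q < 1"
  shows "(pp (-(q^3)) (q^8) * pp (-(q^5)) (q^8))^2 - q * (pp (-q) (q^8) * pp (-(q^7)) (q^8))^2
      = (pp (q^2) (q^4) / pp (q^4) (q^4))^2 * (pp (-q) (q^8) * pp (-(q^3)) (q^8) * pp (-(q^5)) (q^8) * pp (-(q^7)) (q^8))"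
proof -
  define A1 where "A1 = pp (-q) (q^8)"
  define A3 where "A3 = pp (-(q^3)) (q^8)"
  define A5 where "A5 = pp (-(q^5)) (q^8)"
  define A7 where "A7 = pp (-(q^7)) (q^8)"
  define B2 where "B2 = pp (q^2) (q^4)"
  define D4 where "D4 = pp (q^4) (q^4)"
  define E4 where "E4 = qinf (q^4)"
  define E8 where "E8 = qinf (q^8)"
  have nq: "norm (q^k) < 1" if "k \<ge> 1" for k
    using q that by (simp add: norm_power power_less_one_iff)
  have nq': "norm (- (q^k)) < 1" if "k \<ge> 1" for k using nq[OF that] by simp
  have inv: "inverse (- (q^a)) * q^(a+b) = - (q^b)" for a b
    using q by (simp add: power_add)
  have inv': "inverse (q^a) * q^(a+b) = q^b" for a b
    using q by (simp add: power_add)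
  have I1: "A3 * A5 * E8 = infsum (\<lambda>j. sg j * q powi (4 * j * j + (-1) * j)) UNIV"
  proof -
    have "pp (-1 * q^3) (q^(2*4)) * pp (inverse (-1 * q^3) * q^(2*4)) (q^(2*4)) * qinf (q^(2*4))
       = infsum (\<lambda>j. (-1) powi j * q powi (int 4 * j * j + (int 3 - int 4) * j)) UNIV"
      by (rule jtp_inst[OF q]) auto
    moreover have "inverse (-1 * q^3) * q^(2*4) = - (q^5)" using inv[of 3 5] by simp
    ultimately show ?thesis unfolding A3_def A5_def E8_def sg_def by simp
  qed
  have I2: "A1 * A7 * E8 = infsum (\<lambda>j. sg j * q powi (4 * j * j + (-3) * j)) UNIV"
  proof -
    have "pp (-1 * q^1) (q^(2*4)) * pp (inverse (-1 * q^1) * q^(2*4)) (q^(2*4)) * qinf (q^(2*4))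
       = infsum (\<lambda>j. (-1) powi j * q powi (int 4 * j * j + (int 1 - int 4) * j)) UNIV"
      by (rule jtp_inst[OF q]) auto
    moreover have "inverse (-1 * q^1) * q^(2*4) = - (q^7)" using inv[of 1 7] by simp
    ultimately show ?thesis unfolding A1_def A7_def E8_def sg_def by simp
  qed
  have I3: "B2 * B2 * E4 = infsum (\<lambda>j. q powi (2 * j * j + 0 * j)) UNIV"
  proof -
    have "pp (1 * q^2) (q^(2*2)) * pp (inverse (1 * q^2) * q^(2*2)) (q^(2*2)) * qinf (q^(2*2))
       = infsum (\<lambda>j. 1 powi j * q powi (int 2 * j * j + (int 2 - int 2) * j)) UNIV"
      by (rule jtp_inst[OF q]) auto
    moreover have "inverse (1 * q^2) * q^(2*2) = q^2" using inv'[of 2 2] by simp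
    ultimately show ?thesis unfolding B2_def E4_def by simp
  qed
  have I4: "pp (-q) (q^4) * pp (-(q^3)) (q^4) * E4 = infsum (\<lambda>j. sg j * q powi (2 * j * j + (-1) * j)) UNIV"
  proof -
    have "pp (-1 * q^1) (q^(2*2)) * pp (inverse (-1 * q^1) * q^(2*2)) (q^(2*2)) * qinf (q^(2*2))
       = infsum (\<lambda>j. (-1) powi j * q powi (int 2 * j * j + (int 1 - int 2) * j)) UNIV"
      by (rule jtp_inst[OF q]) auto
    moreover have "inverse (-1 * q^1) * q^(2*2) = - (q^3)" using inv[of 1 3] by simp
    ultimately show ?thesis unfolding E4_def sg_def by simp
  qed
  have S: "(A3 * A5 * E8)^2 - q * (A1 * A7 * E8)^2 = (B2 * B2 * E4) * (pp (-q) (q^4) * pp (-(q^3)) (q^4) * E4)"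
    unfolding I1 I2 I3 I4 by (rule series_identity[OF q])
  have q8: "(q^4)^2 = q^8" by (simp add: power_mult[symmetric])
  have q5: "(-q) * q^4 = -(q^5)" by (simp add: eval_nat_numeral)
  have q7: "(-(q^3)) * q^4 = -(q^7)" by (simp add: eval_nat_numeral)
  have C1: "pp (-q) (q^4) = A1 * A5"
    using pp_split[OF nq[of 4], of "-q"] unfolding q8 q5 A1_def A5_def by simp
  have C3: "pp (-(q^3)) (q^4) = A3 * A7"
    using pp_split[OF nq[of 4], of "-(q^3)"] unfolding q8 q7 A3_def A7_def by simp
  have E8e: "E8 = D4 * E4"
    unfolding E8_def D4_def E4_def qinf_pp using pp_mult_neg[OF nq[of 4], of "q^4"]
    by (simp add: power_mult[symmetric])
  have D4nz: "D4 \<noteq> 0" unfolding D4_def by (rule pp_nz) (use nq in auto)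
  have E4nz: "E4 \<noteq> 0" unfolding E4_def by (rule qfac_lim(2)[OF nq]) simp
  have "(D4 * E4)^2 * ((A3 * A5)^2 - q * (A1 * A7)^2) = (D4 * E4)^2 * ((B2 / D4)^2 * (A1 * A3 * A5 * A7))"
  proof -
    have "(D4 * E4)^2 * ((A3 * A5)^2 - q * (A1 * A7)^2) = (A3 * A5 * E8)^2 - q * (A1 * A7 * E8)^2"
      unfolding E8e by (simp add: algebra_simps power2_eq_square)
    also have "\<dots> = (B2 * B2 * E4) * (A1 * A5 * (A3 * A7) * E4)" unfolding S C1 C3 ..
    also have "\<dots> = (D4 * E4)^2 * ((B2 / D4)^2 * (A1 * A3 * A5 * A7))"
      using D4nz by (simp add: field_simps power2_eq_square)
    finally show ?thesis .
  qed
  then have "(A3 * A5)^2 - q * (A1 * A7)^2 = (B2 / D4)^2 * (A1 * A3 * A5 * A7)"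
    using D4nz E4nz by simp
  then show ?thesis unfolding A1_def A3_def A5_def A7_def B2_def D4_def .
qed

lemma kron8_cases: "kron8 n = 1 \<or> kron8 n = 0 \<or> kron8 n = -1"
  unfolding kron8_def by auto

lemma kron8_per: "kron8 (8 * n + c) = kron8 c"
  unfolding kron8_def by simp

lemma conv_f:
  fixes q :: complex
  assumes q: "norm q < 1"
  shows "convergent_prod (\<lambda>k. (1 - q ^ Suc k) powi kron8 (Suc k))"
proof -
  define r where "r = norm q"
  have r: "0 \<le> r" "r < 1" using q unfolding r_def by auto
  have bd: "norm ((1 - q ^ Suc k) powi kron8 (Suc k) - 1) \<le> r ^ Suc k / (1 - r)" for k
  proof -
    define x where "x = q ^ Suc k"
    have nx: "norm x = r ^ Suc k" unfolding x_def r_def by (rule norm_power)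
    have rk: "r ^ Suc k \<le> r" using r by (simp add: power_le_one mult_left_le)
    have rk0: "0 \<le> r ^ Suc k" using r by simp
    have le1: "r ^ Suc k \<le> r ^ Suc k / (1 - r)"
      using r rk0 by (simp add: le_divide_eq mult_left_le)
    consider "kron8 (Suc k) = 1" | "kron8 (Suc k) = 0" | "kron8 (Suc k) = -1"
      using kron8_cases by blast
    then show ?thesis
    proof cases
      case 1
      then show ?thesis using le1 nx by (simp add: x_def)
    next
      case 2
      then show ?thesis using r by simp
    next
      case 3
      have n1x: "norm (1 - x) \<ge> 1 - r"
      proof -
        have "norm (1::complex) - norm x \<le> norm (1 - x)" by (rule norm_triangle_ineq2)
        then show ?thesis using nx rk by simp
      qed
      have nz: "1 - x \<noteq> 0" using n1x r by auto
      have "inverse (1 - x) - 1 = x / (1 - x)" using nz by (simp add: field_simps)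
      then have "norm ((1 - q ^ Suc k) powi kron8 (Suc k) - 1) = norm x / norm (1 - x)"
        using 3 unfolding x_def by (simp add: norm_divide)
      also have "\<dots> \<le> norm x / (1 - r)"
      proof (rule divide_left_mono)
        show "0 < norm (1 - x) * (1 - r)" using n1x r by (intro mult_pos_pos) auto
      qed (use n1x in auto)
      finally show ?thesis using nx by simp
    qed
  qed
  have "summable (\<lambda>k. r ^ Suc k / (1 - r))"
    using r by (intro summable_divide) (simp add: summable_geometric summable_mult)
  then have "summable (\<lambda>k. norm ((1 - q ^ Suc k) powi kron8 (Suc k) - 1))"
    by (rule summable_comparison_test'[where N = 0]) (use bd in auto)
  then show ?thesis
    by (intro abs_convergent_prod_imp_convergent_prod summable_imp_abs_convergent_prod)
qed

lemma sub_f: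
  fixes q :: complex
  assumes q: "norm q < 1"
  shows "convergent_prod (\<lambda>n. (1 - q ^ Suc (8 * n + r)) powi kron8 (Suc (8 * n + r)))
    \<and> prodinf (\<lambda>n. (1 - q ^ Suc (8 * n + r)) powi kron8 (Suc (8 * n + r))) = pp (- (q ^ Suc r)) (q^8) powi kron8 (Suc r)"
proof -
  have q8: "norm (q^8) < 1" using q by (simp add: norm_power power_less_one_iff)
  have e: "(1 - q ^ Suc (8 * n + r)) powi kron8 (Suc (8 * n + r)) = (1 + (- (q ^ Suc r)) * (q^8) ^ n) powi kron8 (Suc r)" for n
  proof -
    have "Suc (8 * n + r) = 8 * n + Suc r" by simp
    then have k: "kron8 (Suc (8 * n + r)) = kron8 (Suc r)" by (simp only: kron8_per)
    have "Suc (8 * n + r) = Suc r + 8 * n" by simp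
    then have p: "q ^ Suc (8 * n + r) = q ^ Suc r * (q^8) ^ n"
      by (simp only: power_add power_mult)
    show ?thesis unfolding k p by simp
  qed
  have c: "convergent_prod (\<lambda>n. 1 + (- (q ^ Suc r)) * (q^8) ^ n)" by (rule conv_geo[OF q8])
  consider "kron8 (Suc r) = 1" | "kron8 (Suc r) = 0" | "kron8 (Suc r) = -1"
    using kron8_cases by blast
  then show ?thesis
  proof cases
    case 1
    then show ?thesis unfolding e using c by (simp add: pp_def)
  next
    case 2
    then show ?thesis unfolding e by simp
  next
    case 3
    then show ?thesis unfolding e using c
      by (simp add: pp_def power_int_minus prodinf_inverse)
  qed
qed

lemma v_prod:
  fixes q :: complex
  assumes q: "norm q < 1"
  shows "prodinf (\<lambda>k. (1 - q ^ Suc k) powi kron8 (Suc k))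
       = pp (-q) (q^8) * inverse (pp (-(q^3)) (q^8)) * inverse (pp (-(q^5)) (q^8)) * pp (-(q^7)) (q^8)"
proof -
  have "prodinf (\<lambda>k. (1 - q ^ Suc k) powi kron8 (Suc k))
      = (\<Prod>r<8. prodinf (\<lambda>n. (1 - q ^ Suc (8 * n + r)) powi kron8 (Suc (8 * n + r))))"
    by (rule interleave) (use conv_f[OF q] sub_f[OF q] in auto)
  also have "\<dots> = (\<Prod>r<8. pp (- (q ^ Suc r)) (q^8) powi kron8 (Suc r))"
    using sub_f[OF q] by simp
  also have "\<dots> = pp (-q) (q^8) * inverse (pp (-(q^3)) (q^8)) * inverse (pp (-(q^5)) (q^8)) * pp (-(q^7)) (q^8)"
  proof -
    have ex: "(\<Prod>r<8. g r) = g 0 * g 1 * g 2 * g 3 * g 4 * g 5 * g 6 * g 7" for g :: "nat \<Rightarrow> complex"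
      by (simp add: eval_nat_numeral)
    have k: "kron8 1 = 1" "kron8 2 = 0" "kron8 3 = -1" "kron8 4 = 0" "kron8 5 = -1" "kron8 6 = 0" "kron8 7 = 1" "kron8 8 = 0"
      by (simp_all add: kron8_def)
    have s: "Suc 0 = 1" "Suc 1 = 2" "Suc 2 = 3" "Suc 3 = 4" "Suc 4 = 5" "Suc 5 = 6" "Suc 6 = 7" "Suc 7 = 8" by simp_all
    show ?thesis unfolding ex s k by (simp add: power_int_minus)
  qed
  finally show ?thesis .
qed

lemma qpow_exp: "qpow \<tau> r = exp (of_real r * (2 * of_real pi * \<i> * \<tau>))"
  unfolding qpow_def by (simp add: mult_ac)

lemma qpow_nat: "qpow \<tau> (real n) = (qpow \<tau> 1) ^ n"
  unfolding qpow_exp by (simp add: exp_of_nat_mult[symmetric])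

lemma qpow_8: "qpow (8 * \<tau>) r = qpow \<tau> (8 * r)"
  unfolding qpow_exp by (simp add: mult_ac)

lemma qpow_half_sq: "(qpow \<tau> (1/2))^2 = qpow \<tau> 1"
proof -
  have "(qpow \<tau> (1/2))^2 = exp (of_nat 2 * (of_real (1/2) * (2 * of_real pi * \<i> * \<tau>)))"
    unfolding qpow_exp by (rule exp_of_nat_mult[symmetric])
  also have "\<dots> = qpow \<tau> 1" unfolding qpow_exp by (simp add: mult_ac)
  finally show ?thesis .
qed

lemma qpow_norm: "norm (qpow \<tau> r) = exp (- 2 * pi * r * Im \<tau>)"
  unfolding qpow_exp norm_exp_eq_Re by simp

theorem proposition5:
  fixes \<tau> :: complex
  assumes "Im \<tau> > 0"
  shows "2 / p_fun (8 * \<tau>) = (1 - (v_fun \<tau>)\<^sup>2) / v_fun \<tau>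
       \<and> (1 - (v_fun \<tau>)\<^sup>2) / v_fun \<tau> = 1 / v_fun \<tau> - v_fun \<tau>"
proof -
  define q where "q = qpow \<tau> 1"
  define t where "t = qpow \<tau> (1/2)"
  have q0: "q \<noteq> 0" unfolding q_def qpow_def by simp
  have t0: "t \<noteq> 0" unfolding t_def qpow_def by simp
  have tq: "t^2 = q" unfolding t_def q_def by (rule qpow_half_sq)
  have nq: "norm q < 1" unfolding q_def qpow_norm using assms by simp
  have nqk: "norm (q^k) < 1" if "k \<ge> 1" for k
    using nq that by (simp add: norm_power power_less_one_iff)
  define A1 where "A1 = pp (-q) (q^8)"
  define A3 where "A3 = pp (-(q^3)) (q^8)"
  define A5 where "A5 = pp (-(q^5)) (q^8)"
  define A7 where "A7 = pp (-(q^7)) (q^8)"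
  define B2 where "B2 = pp (q^2) (q^4)"
  define D4 where "D4 = pp (q^4) (q^4)"
  have nzs: "A1 \<noteq> 0" "A3 \<noteq> 0" "A5 \<noteq> 0" "A7 \<noteq> 0" "B2 \<noteq> 0" "D4 \<noteq> 0"
    unfolding A1_def A3_def A5_def A7_def B2_def D4_def
    by (rule pp_nz; simp add: nq nqk)+
  have V: "v_fun \<tau> = t * (A1 * A7 / (A3 * A5))"
  proof -
    have "v_fun \<tau> = t * prodinf (\<lambda>k. (1 - q ^ Suc k) powi kron8 (Suc k))"
      unfolding v_fun_def t_def q_def qpow_nat ..
    also have "\<dots> = t * (A1 * A7 / (A3 * A5))"
      unfolding v_prod[OF nq] A1_def A3_def A5_def A7_def by (simp add: field_simps)
    finally show ?thesis .
  qed
  have P: "p_fun (8 * \<tau>) = 2 * t * (D4 / B2)^2"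
  proof -
    have e1: "qpow (8 * \<tau>) (1/16) = t" unfolding t_def qpow_8 by simp
    have e2: "qpow (8 * \<tau>) (real (Suc k) / 2) = 1 + q^4 * (q^4)^k - 1" for k
    proof -
      have "qpow (8 * \<tau>) (real (Suc k) / 2) = qpow \<tau> (real (4 + 4 * k))"
        unfolding qpow_8 by (rule arg_cong[where f="qpow \<tau>"]) simp
      also have "\<dots> = q^4 * (q^4)^k" unfolding qpow_nat q_def by (simp add: power_add power_mult)
      finally show ?thesis by simp
    qed
    have e3: "qpow (8 * \<tau>) (real (Suc k) / 2 - 1/4) = 1 + q^2 * (q^4)^k - 1" for k
    proof -
      have "qpow (8 * \<tau>) (real (Suc k) / 2 - 1/4) = qpow \<tau> (real (2 + 4 * k))"
        unfolding qpow_8 by (rule arg_cong[where f="qpow \<tau>"]) (simp add: algebra_simps)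
      also have "\<dots> = q^2 * (q^4)^k" unfolding qpow_nat q_def by (simp only: power_add power_mult)
      finally show ?thesis by simp
    qed
    have c4: "convergent_prod (\<lambda>k. 1 + q^4 * (q^4)^k)" by (rule conv_geo[OF nqk]) simp
    have c2: "convergent_prod (\<lambda>k. 1 + q^2 * (q^4)^k)" by (rule conv_geo[OF nqk]) simp
    have "prodinf (\<lambda>k. ((1 + qpow (8 * \<tau>) (real (Suc k) / 2)) / (1 + qpow (8 * \<tau>) (real (Suc k) / 2 - 1/4))) ^ 2)
        = prodinf (\<lambda>k. ((1 + q^4 * (q^4)^k) / (1 + q^2 * (q^4)^k)) ^ 2)"
      unfolding e2 e3 by simp
    also have "\<dots> = (prodinf (\<lambda>k. (1 + q^4 * (q^4)^k) / (1 + q^2 * (q^4)^k))) ^ 2"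
      by (rule prodinf_power[OF convergent_prod_divide[OF c4 c2]])
    also have "prodinf (\<lambda>k. (1 + q^4 * (q^4)^k) / (1 + q^2 * (q^4)^k)) = D4 / B2"
      unfolding D4_def B2_def pp_def by (rule prodinf_divide[OF c4 c2, symmetric])
    finally show ?thesis unfolding p_fun_def e1 by simp
  qed
  have C: "(A3 * A5)^2 - q * (A1 * A7)^2 = (B2 / D4)^2 * (A1 * A3 * A5 * A7)"
    using core[OF q0 nq] unfolding A1_def A3_def A5_def A7_def B2_def D4_def by simp
  define X where "X = A1 * A7 / (A3 * A5)"
  have X0: "X \<noteq> 0" unfolding X_def using nzs by simp
  have key: "1 - q * X^2 = (B2 / D4)^2 * X"
  proof -
    have "(A3 * A5)^2 * (1 - q * X^2) = (A3 * A5)^2 * ((B2 / D4)^2 * X)"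
    proof -
      have "(A3 * A5)^2 * (1 - q * X^2) = (A3 * A5)^2 - q * (A1 * A7)^2"
        unfolding X_def using nzs by (simp add: field_simps power2_eq_square)
      also have "\<dots> = (A3 * A5)^2 * ((B2 / D4)^2 * X)"
        unfolding C X_def using nzs by (simp add: field_simps power2_eq_square)
      finally show ?thesis .
    qed
    then show ?thesis using nzs by simp
  qed
  have v: "v_fun \<tau> = t * X" unfolding V X_def ..
  have 1: "2 / p_fun (8 * \<tau>) = (1 - (v_fun \<tau>)\<^sup>2) / v_fun \<tau>"
  proof -
    have "(1 - (v_fun \<tau>)\<^sup>2) / v_fun \<tau> = (1 - q * X^2) / (t * X)"
      unfolding v tq[symmetric] by (simp add: power_mult_distrib)
    also have "\<dots> = (B2 / D4)^2 / t" unfolding key using X0 t0 by (simp add: field_simps)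
    also have "\<dots> = 2 / p_fun (8 * \<tau>)" unfolding P using nzs t0 by (simp add: field_simps power2_eq_square)
    finally show ?thesis ..
  qed
  have 2: "(1 - (v_fun \<tau>)\<^sup>2) / v_fun \<tau> = 1 / v_fun \<tau> - v_fun \<tau>"
    by (cases "v_fun \<tau> = 0") (simp_all add: field_simps power2_eq_square)
  show ?thesis using 1 2 by blast
qed


end
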